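(* Let $N\geq 3$ be prime, $q\in\mathbb{C}$ with $q^N=1$, $q\neq 1$, and let $X\subset\mathbb{R}^d$ be a convex subspace. Let $\tau:\Delta^m\to X$ and $\sigma:\Delta^n\to X$ be singular simplices ($m,n\geq 0$). Then for every integer $k\geq 0$, $$\partial^k(\tau*\sigma)=\sum_{i=0}^k q^{\,i(m+1-k+i)}\binom{k}{i}_q\,\mathcal{N}^{k-i}(\tau)*\mathcal{N}^{i}(\sigma).$$
   Context: $q$-numbers: $[k]_q=1+q+\cdots+q^{k-1}$, $[k]_q!=[1]_q\cdots[k]_q$ (with $[0]_q!=1$); $\binom{k}{i}_q$ denotes the Gaussian $q$-binomial coefficient evaluated at $q$, which equals $[k]_q!/([i]_q![k-i]_q!)$ for $0\le i\le k\le N-1$ and satisfies $\binom{n}{k}_q+q^{k+1}\binom{n}{k+1}_q=\binom{n+1}{k+1}_q$. Singular $q$-chains: $C^q_n(X)$ is the free $\mathbb{Z}[q]$-module on continuous maps $\Delta^n\to X$, $\Delta^n$ the convex hull of the standard basis $e_0,\dots,e_n$ of $\mathbb{R}^{n+1}$; $\partial_j\sigma=\sigma\circ\lambda_j$ with $\lambda_j:\Delta^{n-1}\to\Delta^n$ the affine map sending $e_0,\dots,e_{n-1}$ in order to $e_0,\dots,\widehat{e_j},\dots,e_n$; border map $\partial=\sum_{j=0}^n q^j\partial_j$ on $C^q_n(X)$ ($n\ge1$), $\partial=0$ on $C^q_0(X)$. Convex product: for $\tau:\Delta^m\to X$, $\sigma:\Delta^n\to X$ and $(\alpha;\beta)=(\alpha_0,\dots,\alpha_m;\beta_0,\dots,\beta_n)\in\Delta^{m+n+1}$,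 $\tau*\sigma(\alpha;\beta)$ is $\tau(\alpha)$ if $|\beta|=0$, $\sigma(\beta)$ if $|\alpha|=0$, and $|\alpha|\tau(\alpha/|\alpha|)+|\beta|\sigma(\beta/|\beta|)$ otherwise ($|\alpha|=\sum\alpha_i$, $|\beta|=\sum\beta_j$), extended bilinearly to chains. Newton's terms of a singular $m$-simplex $\tau$: $\mathcal{N}^i(\tau)=\partial^i(\tau)$ for $i\le m$, $\mathcal{N}^{m+1}(\tau)=[m+1]_q!\in\mathbb{Z}[q]$, and $\mathcal{N}^i(\tau)=0$ for $i\geq m+2$. Convention for convex products involving scalars: for $c\in\mathbb{Z}[q]$ and a chain $\xi$ of dimension $\ge0$, $c*\xi=\xi*c=c\,\xi$; for $c,c'\in\mathbb{Z}[q]$, $c*c'=0$. *)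

theory Defs
  imports "HOL-Analysis.Analysis" "HOL-Homology.Homology"
begin

text \<open>Singular q-chains with coefficients in the complex numbers (Z[q] is a subring of C).
  A singular n-simplex is a map on standard_simplex n (HOL-Homology's model of Delta^n,
  extensional outside it). The dimension of a chain is carried explicitly.\<close>

type_synonym 'a qchain = "((nat \<Rightarrow> real) \<Rightarrow> 'a) \<Rightarrow>\<^sub>0 complex"

definition qint :: "complex \<Rightarrow> nat \<Rightarrow> complex" where
  "qint q k = (\<Sum>i<k. q ^ i)"

definition qfact :: "complex \<Rightarrow> nat \<Rightarrow> complex" where
  "qfact q k = (\<Prod>i\<in>{1..k}. qint q i)"

fun qbinom :: "complex \<Rightarrow> nat \<Rightarrow> nat \<Rightarrow> complex" where
  "qbinom q n 0 = 1"
| "qbinom q 0 (Suc k) = 0"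
| "qbinom q (Suc n) (Suc k) = qbinom q n k + q ^ (Suc k) * qbinom q n (Suc k)"

definition qsmult :: "complex \<Rightarrow> 'a qchain \<Rightarrow> 'a qchain" where
  "qsmult a c = Poly_Mapping.map (\<lambda>x. a * x) c"

definition qbd :: "complex \<Rightarrow> nat \<Rightarrow> 'a qchain \<Rightarrow> 'a qchain" where
  "qbd q p c = (if p = 0 then 0 else
     (\<Sum>s\<in>Poly_Mapping.keys c. \<Sum>j\<le>p. Poly_Mapping.single (singular_face p j s) (q ^ j * Poly_Mapping.lookup c s)))"

fun qbdpow :: "complex \<Rightarrow> nat \<Rightarrow> nat \<Rightarrow> 'a qchain \<Rightarrow> 'a qchain" where
  "qbdpow q 0 p c = c"
| "qbdpow q (Suc k) p c = qbd q (p - k) (qbdpow q k p c)"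

definition conv_simplex :: "nat \<Rightarrow> nat \<Rightarrow> ((nat \<Rightarrow> real) \<Rightarrow> 'a::real_vector)
    \<Rightarrow> ((nat \<Rightarrow> real) \<Rightarrow> 'a) \<Rightarrow> (nat \<Rightarrow> real) \<Rightarrow> 'a" where
  "conv_simplex m n tu sg = restrict (\<lambda>x.
     let alpha = (\<lambda>i. if i \<le> m then x i else 0);
         beta = (\<lambda>j. if j \<le> n then x (m + 1 + j) else 0);
         a = (\<Sum>i\<le>m. x i);
         b = (\<Sum>j\<le>n. x (m + 1 + j))
     in if b = 0 then tu alpha
        else if a = 0 then sg beta
        else a *\<^sub>R tu (\<lambda>i. alpha i / a) + b *\<^sub>R sg (\<lambda>j. beta j / b))
   (standard_simplex (m + n + 1))"

definition conv_chain :: "nat \<Rightarrow> nat \<Rightarrow> 'a::real_vector qchain \<Rightarrow> 'a qchain \<Rightarrow> 'a qchain" where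
  "conv_chain m n c d = (\<Sum>t\<in>Poly_Mapping.keys c. \<Sum>s\<in>Poly_Mapping.keys d.
      Poly_Mapping.single (conv_simplex m n t s) (Poly_Mapping.lookup c t * Poly_Mapping.lookup d s))"

datatype 'a newt = Ch nat "'a qchain" | Sc complex

definition newton :: "complex \<Rightarrow> nat \<Rightarrow> ((nat \<Rightarrow> real) \<Rightarrow> 'a) \<Rightarrow> nat \<Rightarrow> 'a newt" where
  "newton q m tu i =
     (if i \<le> m then Ch (m - i) (qbdpow q i m (Poly_Mapping.single tu 1))
      else if i = m + 1 then Sc (qfact q (m + 1))
      else Sc 0)"

fun newt_prod :: "'a::real_vector newt \<Rightarrow> 'a newt \<Rightarrow> 'a qchain" where
  "newt_prod (Ch p c) (Ch r d) = conv_chain p r c d"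
| "newt_prod (Sc a) (Ch r d) = qsmult a d"
| "newt_prod (Ch p c) (Sc a) = qsmult a c"
| "newt_prod (Sc a) (Sc b) = 0"

end

theory Submission
  imports Defs
begin


lemma lookup_qsmult[simp]: "Poly_Mapping.lookup (qsmult a c) k = a * Poly_Mapping.lookup c k"
  unfolding qsmult_def by transfer (simp add: when_def)

lemma qsmult_add: "qsmult a (x + y) = qsmult a x + qsmult a y"
  by (rule poly_mapping_eqI) (simp add: lookup_add algebra_simps)
lemma qsmult_add_left: "qsmult (a + b) x = qsmult a x + qsmult b x"
  by (rule poly_mapping_eqI) (simp add: lookup_add algebra_simps)
lemma qsmult_zero[simp]: "qsmult a 0 = 0"
  by (rule poly_mapping_eqI) simp
lemma qsmult_zero_left[simp]: "qsmult 0 x = 0"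
  by (rule poly_mapping_eqI) simp
lemma qsmult_one[simp]: "qsmult 1 x = x"
  by (rule poly_mapping_eqI) simp
lemma qsmult_qsmult[simp]: "qsmult a (qsmult b x) = qsmult (a * b) x"
  by (rule poly_mapping_eqI) (simp add: algebra_simps)
lemma qsmult_single: "qsmult a (Poly_Mapping.single k v) = Poly_Mapping.single k (a * v)"
  by (rule poly_mapping_eqI) (simp add: lookup_single when_def)
lemma qsmult_sum: "qsmult a (sum f S) = (\<Sum>x\<in>S. qsmult a (f x))"
  by (rule poly_mapping_eqI) (simp add: lookup_sum sum_distrib_left)

definition lin :: "('k \<Rightarrow> complex \<Rightarrow> 'b::ab_group_add) \<Rightarrow> ('k \<Rightarrow>\<^sub>0 complex) \<Rightarrow> 'b" where
  "lin F c = (\<Sum>s\<in>Poly_Mapping.keys c. F s (Poly_Mapping.lookup c s))"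

lemma lin_superset:
  assumes "finite S" "Poly_Mapping.keys c \<subseteq> S" "\<And>s. F s 0 = 0"
  shows "lin F c = (\<Sum>s\<in>S. F s (Poly_Mapping.lookup c s))"
  unfolding lin_def using assms
  by (intro sum.mono_neutral_left) (auto simp: in_keys_iff)

lemma lin_add:
  assumes "\<And>s x y. F s (x + y) = F s x + F s y"
  shows "lin F (a + b) = lin F a + lin F b"
proof -
  have F0: "F s 0 = 0" for s using assms[of s 0 0] by simp
  let ?S = "Poly_Mapping.keys a \<union> Poly_Mapping.keys b"
  have "lin F (a + b) = (\<Sum>s\<in>?S. F s (Poly_Mapping.lookup (a+b) s))"
    by (rule lin_superset) (use keys_add[of a b] F0 in auto)
  also have "\<dots> = (\<Sum>s\<in>?S. F s (Poly_Mapping.lookup a s)) + (\<Sum>s\<in>?S. F s (Poly_Mapping.lookup b s))"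
    by (simp add: lookup_add assms sum.distrib)
  also have "\<dots> = lin F a + lin F b"
    by (subst (1 2) lin_superset[where S="?S"]) (use F0 in auto)
  finally show ?thesis .
qed

lemma lin_zero[simp]: "lin F 0 = 0" by (simp add: lin_def)

lemma lin_single:
  assumes "F s 0 = 0"
  shows "lin F (Poly_Mapping.single s v) = F s v"
  using assms by (simp add: lin_def)

lemma lin_sum:
  assumes "\<And>s x y. F s (x + y) = F s x + F s y"
  shows "lin F (sum f S) = (\<Sum>i\<in>S. lin F (f i))"
  by (induction S rule: infinite_finite_induct) (simp_all add: lin_add[OF assms])

lemma keys_qsmult: "Poly_Mapping.keys (qsmult a c) \<subseteq> Poly_Mapping.keys c"
  by (auto simp: in_keys_iff)

lemma lin_qsmult:
  assumes "\<And>s x y. F s (x + y) = F s x + F s y" "\<And>s x. F s (a * x) = qsmult a (F s x)"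
  shows "lin F (qsmult a c) = qsmult a (lin F c)"
proof -
  have F0: "F s 0 = 0" for s using assms(1)[of s 0 0] by simp
  have "lin F (qsmult a c) = (\<Sum>s\<in>Poly_Mapping.keys c. F s (a * Poly_Mapping.lookup c s))"
    by (subst lin_superset[where S="Poly_Mapping.keys c"]) (use F0 keys_qsmult in auto)
  also have "\<dots> = qsmult a (lin F c)"
    by (simp add: assms(2) lin_def qsmult_sum)
  finally show ?thesis .
qed

lemma pm_decomp: "(\<Sum>t\<in>Poly_Mapping.keys c. Poly_Mapping.single t (Poly_Mapping.lookup c t)) = c"
  by (rule poly_mapping_eqI) (auto simp: lookup_sum lookup_single when_def in_keys_iff sum.delta)

lemma additive_sum:
  fixes Phi :: "'a qchain \<Rightarrow> 'b qchain"
  assumes "\<And>x y. Phi (x + y) = Phi x + Phi y"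
  shows "Phi (sum f S) = (\<Sum>i\<in>S. Phi (f i))"
proof -
  have "Phi 0 = 0" using assms[of 0 0] by simp
  then show ?thesis by (induction S rule: infinite_finite_induct) (simp_all add: assms)
qed

lemma lin_decomp:
  fixes Phi :: "'a qchain \<Rightarrow> 'b qchain"
  assumes "\<And>x y. Phi (x + y) = Phi x + Phi y" "\<And>a x. Phi (qsmult a x) = qsmult a (Phi x)"
  shows "Phi c = (\<Sum>t\<in>Poly_Mapping.keys c. qsmult (Poly_Mapping.lookup c t) (Phi (Poly_Mapping.single t 1)))"
proof -
  have "Phi c = Phi (\<Sum>t\<in>Poly_Mapping.keys c. qsmult (Poly_Mapping.lookup c t) (Poly_Mapping.single t 1))"
    by (simp add: qsmult_single pm_decomp)
  also have "\<dots> = (\<Sum>t\<in>Poly_Mapping.keys c. qsmult (Poly_Mapping.lookup c t) (Phi (Poly_Mapping.single t 1)))"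
    by (simp add: additive_sum[where Phi=Phi, OF assms(1)] assms(2))
  finally show ?thesis .
qed

lemma lin_eq:
  fixes Phi Psi :: "'a qchain \<Rightarrow> 'b qchain"
  assumes "\<And>x y. Phi (x + y) = Phi x + Phi y" "\<And>a x. Phi (qsmult a x) = qsmult a (Phi x)"
    "\<And>x y. Psi (x + y) = Psi x + Psi y" "\<And>a x. Psi (qsmult a x) = qsmult a (Psi x)"
    "\<And>t. t \<in> Poly_Mapping.keys c \<Longrightarrow> Phi (Poly_Mapping.single t 1) = Psi (Poly_Mapping.single t 1)"
  shows "Phi c = Psi c"
  by (subst lin_decomp[where Phi=Phi, OF assms(1,2)], subst lin_decomp[where Phi=Psi, OF assms(3,4)])
     (simp add: assms(5))

lemma qbd_lin: "qbd q p c = (if p = 0 then 0 else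
   lin (\<lambda>s x. \<Sum>j\<le>p. Poly_Mapping.single (singular_face p j s) (q ^ j * x)) c)"
  by (simp add: qbd_def lin_def)

lemma qbd_add: "qbd q p (x + y) = qbd q p x + qbd q p y"
  by (simp add: qbd_lin lin_add single_add distrib_left sum.distrib)

lemma qbd_qsmult: "qbd q p (qsmult a x) = qsmult a (qbd q p x)"
  by (simp add: qbd_lin lin_qsmult single_add distrib_left sum.distrib qsmult_sum qsmult_single mult.left_commute)

lemma qbd_single: "p \<noteq> 0 \<Longrightarrow> qbd q p (Poly_Mapping.single s v) = (\<Sum>j\<le>p. Poly_Mapping.single (singular_face p j s) (q ^ j * v))"
  by (simp add: qbd_lin lin_single)

lemma qbd_zero[simp]: "qbd q p 0 = 0"
  by (simp add: qbd_lin)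

lemma qbd_sum: "qbd q p (sum f S) = (\<Sum>i\<in>S. qbd q p (f i))"
  by (rule additive_sum) (rule qbd_add)

lemma conv_chain_lin: "conv_chain m n c d = lin (\<lambda>t x. lin (\<lambda>s y. Poly_Mapping.single (conv_simplex m n t s) (x * y)) d) c"
  by (simp add: conv_chain_def lin_def)

lemma conv_chain_add1: "conv_chain m n (c + c') d = conv_chain m n c d + conv_chain m n c' d"
  unfolding conv_chain_lin
  by (rule lin_add) (simp add: lin_def single_add distrib_right sum.distrib)

lemma conv_chain_add2: "conv_chain m n c (d + d') = conv_chain m n c d + conv_chain m n c d'"
  unfolding conv_chain_lin
  by (subst (1 2 3) lin_def) (simp add: lin_add single_add distrib_left sum.distrib)

lemma conv_chain_qsmult1: "conv_chain m n (qsmult a c) d = qsmult a (conv_chain m n c d)"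
  unfolding conv_chain_lin
  by (rule lin_qsmult) (simp_all add: lin_def single_add distrib_right sum.distrib qsmult_sum qsmult_single mult.assoc)

lemma conv_chain_qsmult2: "conv_chain m n c (qsmult a d) = qsmult a (conv_chain m n c d)"
  unfolding conv_chain_lin
  by (subst (1 2) lin_def) (simp add: lin_qsmult single_add distrib_left qsmult_sum qsmult_single mult.left_commute)

lemma conv_chain_single: "conv_chain m n (Poly_Mapping.single t a) (Poly_Mapping.single s b) = Poly_Mapping.single (conv_simplex m n t s) (a * b)"
  unfolding conv_chain_lin by (simp add: lin_single)

lemma conv_chain_sum1: "conv_chain m n (sum f S) d = (\<Sum>i\<in>S. conv_chain m n (f i) d)"
  by (rule additive_sum) (rule conv_chain_add1)

definition coeffsum :: "'a qchain \<Rightarrow> complex" where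
  "coeffsum c = lin (\<lambda>s x. x) c"

lemma coeffsum_add: "coeffsum (x + y) = coeffsum x + coeffsum y"
  unfolding coeffsum_def by (rule lin_add) simp

lemma coeffsum_qsmult: "coeffsum (qsmult a x) = a * coeffsum x"
proof -
  have "coeffsum (qsmult a x) = (\<Sum>s\<in>Poly_Mapping.keys x. Poly_Mapping.lookup (qsmult a x) s)"
    unfolding coeffsum_def by (rule lin_superset) (simp_all add: keys_qsmult)
  also have "\<dots> = a * coeffsum x"
    by (simp add: coeffsum_def lin_def sum_distrib_left)
  finally show ?thesis .
qed

lemma coeffsum_zero[simp]: "coeffsum 0 = 0" by (simp add: coeffsum_def)

lemma coeffsum_single[simp]: "coeffsum (Poly_Mapping.single s v) = v"
  unfolding coeffsum_def by (simp add: lin_single)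

lemma coeffsum_sum: "coeffsum (sum f S) = (\<Sum>i\<in>S. coeffsum (f i))"
  by (induction S rule: infinite_finite_induct) (simp_all add: coeffsum_add)

lemma coeffsum_qbd: "p \<noteq> 0 \<Longrightarrow> coeffsum (qbd q p c) = qint q (Suc p) * coeffsum c"
proof -
  assume p: "p \<noteq> 0"
  have "coeffsum (qbd q p c) = (\<Sum>s\<in>Poly_Mapping.keys c. \<Sum>j\<le>p. q ^ j * Poly_Mapping.lookup c s)"
    using p by (simp add: qbd_def coeffsum_sum)
  also have "\<dots> = qint q (Suc p) * coeffsum c"
    by (simp add: qint_def coeffsum_def lin_def sum_distrib_left sum_distrib_right lessThan_Suc_atMost)
  finally show ?thesis .
qed



lemma sum_split_at:
  fixes f :: "nat \<Rightarrow> 'b::comm_monoid_add"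
  shows "(\<Sum>i\<le>m + n + 1. f i) = (\<Sum>i\<le>m. f i) + (\<Sum>j\<le>n. f (m + 1 + j))"
  by (induction n) (simp_all add: add.assoc)

lemma sum_sface:
  fixes y :: "nat \<Rightarrow> 'b::comm_monoid_add"
  shows "j \<le> p \<Longrightarrow> (\<Sum>i\<le>p. simplical_face j y i) = (\<Sum>i<p. y i)"
proof (induction p)
  case 0 then show ?case by (simp add: simplical_face_def)
next
  case (Suc p)
  show ?case
  proof (cases "j \<le> p")
    case True
    then show ?thesis using Suc by (simp add: simplical_face_def)
  next
    case False
    then have "j = Suc p" using Suc by simp
    then show ?thesis by (simp add: simplical_face_def lessThan_Suc_atMost)
  qed
qed

lemma std_div:
  assumes "\<And>i. 0 \<le> z i" "\<And>i. i > m \<Longrightarrow> z i = 0" "(\<Sum>i\<le>m. z i) \<noteq> 0"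
  shows "(\<lambda>i. z i / (\<Sum>i\<le>m. z i)) \<in> standard_simplex m"
proof -
  let ?s = "\<Sum>i\<le>m. z i"
  have s0: "?s > 0" using assms(1,3) by (metis order_le_less sum_nonneg)
  have le: "z i \<le> ?s" for i
  proof (cases "i \<le> m")
    case True then show ?thesis using assms(1) by (intro member_le_sum) auto
  next
    case False then show ?thesis using assms(2) s0 by simp
  qed
  show ?thesis unfolding standard_simplex_def
    using s0 le assms(1,2) by (auto simp: sum_divide_distrib[symmetric])
qed

lemma std_parts:
  assumes y: "y \<in> standard_simplex (m + n + 1)"
  defines "a \<equiv> \<Sum>i\<le>m. y i" and "b \<equiv> \<Sum>j\<le>n. y (m + 1 + j)"
  shows "a + b = 1" "a \<ge> 0" "b \<ge> 0"
    "a \<noteq> 0 \<Longrightarrow> (\<lambda>i. (if i \<le> m then y i else 0) / a) \<in> standard_simplex m"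
    "b \<noteq> 0 \<Longrightarrow> (\<lambda>j. (if j \<le> n then y (m + 1 + j) else 0) / b) \<in> standard_simplex n"
proof -
  have nn: "0 \<le> y i" for i using y by (simp add: standard_simplex_def)
  have "(\<Sum>i\<le>m + n + 1. y i) = 1" using y by (simp add: standard_simplex_def)
  then show "a + b = 1" unfolding a_def b_def by (simp only: sum_split_at)
  show "a \<ge> 0" unfolding a_def using nn by (simp add: sum_nonneg)
  show "b \<ge> 0" unfolding b_def using nn by (simp add: sum_nonneg)
  show "a \<noteq> 0 \<Longrightarrow> (\<lambda>i. (if i \<le> m then y i else 0) / a) \<in> standard_simplex m"
  proof -
    assume a: "a \<noteq> 0"
    have "(\<Sum>i\<le>m. (if i \<le> m then y i else 0)) = a" by (simp add: a_def)
    then show ?thesis using std_div[of "\<lambda>i. if i \<le> m then y i else 0" m] a nn by auto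
  qed
  show "b \<noteq> 0 \<Longrightarrow> (\<lambda>j. (if j \<le> n then y (m + 1 + j) else 0) / b) \<in> standard_simplex n"
  proof -
    assume b: "b \<noteq> 0"
    have "(\<Sum>i\<le>n. (if i \<le> n then y (m + 1 + i) else 0)) = b" by (simp add: b_def)
    then show ?thesis using std_div[of "\<lambda>i. if i \<le> n then y (m + 1 + i) else 0" n] b nn by auto
  qed
qed

lemma face_conv_left:
  assumes j: "j \<le> Suc p"
  shows "singular_face (Suc p + r + 1) j (conv_simplex (Suc p) r t s) = conv_simplex p r (singular_face (Suc p) j t) s"
proof -
  have *: "conv_simplex (Suc p) r t s (simplical_face j y) = conv_simplex p r (singular_face (Suc p) j t) s y"
    if y: "y \<in> standard_simplex (p + r + 1)" for y
  proof -
    have yf: "simplical_face j y \<in> standard_simplex (Suc p + r + 1)"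
      using simplical_face_in_standard_simplex[of "Suc p + r + 1" j y] y j by simp
    define a where "a = (\<Sum>i\<le>p. y i)"
    define b where "b = (\<Sum>k\<le>r. y (p + 1 + k))"
    define al where "al = (\<lambda>i. if i \<le> p then y i else 0)"
    define be where "be = (\<lambda>k. if k \<le> r then y (p + 1 + k) else 0)"
    have hA: "(\<Sum>i\<le>Suc p. simplical_face j y i) = a"
      using sum_sface[OF j, of y] by (simp add: a_def lessThan_Suc_atMost)
    have hB: "(\<Sum>k\<le>r. simplical_face j y (Suc p + 1 + k)) = b"
      using j by (simp add: b_def simplical_face_def)
    have hal: "(\<lambda>i. if i \<le> Suc p then simplical_face j y i else 0) = simplical_face j al"
      using j by (auto simp: simplical_face_def al_def fun_eq_iff)
    have hbe: "(\<lambda>k. if k \<le> r then simplical_face j y (Suc p + 1 + k) else 0) = be"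
      using j by (auto simp: simplical_face_def be_def fun_eq_iff)
    have hdiv: "(\<lambda>i. simplical_face j al i / a) = simplical_face j (\<lambda>i. al i / a)"
      by (auto simp: simplical_face_def fun_eq_iff)
    have ab: "a + b = 1" and ast: "a \<noteq> 0 \<Longrightarrow> (\<lambda>i. al i / a) \<in> standard_simplex p"
      using std_parts[OF y] by (simp_all add: a_def b_def al_def)
    have L: "conv_simplex (Suc p) r t s (simplical_face j y) =
      (if b = 0 then t (simplical_face j al)
       else if a = 0 then s be
       else a *\<^sub>R t (\<lambda>i. simplical_face j al i / a) + b *\<^sub>R s (\<lambda>k. be k / b))"
      unfolding conv_simplex_def Let_def restrict_apply' [OF yf] hA hB hal hbe
      by (simp only: fun_cong[OF hal] fun_cong[OF hbe])
    have R: "conv_simplex p r (singular_face (Suc p) j t) s y =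
      (if b = 0 then singular_face (Suc p) j t al
       else if a = 0 then s be
       else a *\<^sub>R singular_face (Suc p) j t (\<lambda>i. al i / a) + b *\<^sub>R s (\<lambda>k. be k / b))"
      unfolding conv_simplex_def Let_def restrict_apply' [OF y] a_def b_def al_def be_def ..
    show ?thesis
    proof (cases "b = 0")
      case True
      then have "a = 1" using ab by simp
      then have "al \<in> standard_simplex p" using ast by simp
      then show ?thesis using True L R by (simp add: singular_face_def)
    next
      case False
      then show ?thesis using L R ast by (simp add: singular_face_def hdiv)
    qed
  qed
  show ?thesis
    unfolding singular_face_def[of "Suc p + r + 1"]
    apply (rule ext)
    subgoal for y
      using *[of y] by (simp add: conv_simplex_def[of p r] restrict_def)
    done
qed

lemma face_conv_right:
  assumes j: "j \<le> Suc r"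
  shows "singular_face (p + Suc r + 1) (p + 1 + j) (conv_simplex p (Suc r) t s) = conv_simplex p r t (singular_face (Suc r) j s)"
proof -
  have *: "conv_simplex p (Suc r) t s (simplical_face (p + 1 + j) y) = conv_simplex p r t (singular_face (Suc r) j s) y"
    if y: "y \<in> standard_simplex (p + r + 1)" for y
  proof -
    have yf: "simplical_face (p + 1 + j) y \<in> standard_simplex (p + Suc r + 1)"
      using simplical_face_in_standard_simplex[of "p + Suc r + 1" "p + 1 + j" y] y j by simp
    define a where "a = (\<Sum>i\<le>p. y i)"
    define b where "b = (\<Sum>k\<le>r. y (p + 1 + k))"
    define al where "al = (\<lambda>i. if i \<le> p then y i else 0)"
    define be where "be = (\<lambda>k. if k \<le> r then y (p + 1 + k) else 0)"
    have hA: "(\<Sum>i\<le>p. simplical_face (p + 1 + j) y i) = a"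
      by (simp add: a_def simplical_face_def)
    have sh: "simplical_face (p + 1 + j) y (p + 1 + k) = simplical_face j (\<lambda>k. y (p + 1 + k)) k" for k
      by (auto simp: simplical_face_def)
    have hB: "(\<Sum>k\<le>Suc r. simplical_face (p + 1 + j) y (p + 1 + k)) = b"
      unfolding sh using sum_sface[OF j, of "\<lambda>k. y (p + 1 + k)"] by (simp add: b_def lessThan_Suc_atMost)
    have hal: "(\<lambda>i. if i \<le> p then simplical_face (p + 1 + j) y i else 0) = al"
      by (auto simp: simplical_face_def al_def fun_eq_iff)
    have hbe: "(\<lambda>k. if k \<le> Suc r then simplical_face (p + 1 + j) y (p + 1 + k) else 0) = simplical_face j be"
      using j by (auto simp: simplical_face_def be_def fun_eq_iff)
    have hdiv: "(\<lambda>i. simplical_face j be i / b) = simplical_face j (\<lambda>i. be i / b)"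
      by (auto simp: simplical_face_def fun_eq_iff)
    have ab: "a + b = 1" and bst: "b \<noteq> 0 \<Longrightarrow> (\<lambda>i. be i / b) \<in> standard_simplex r"
      using std_parts[OF y] by (simp_all add: a_def b_def be_def)
    have L: "conv_simplex p (Suc r) t s (simplical_face (p + 1 + j) y) =
      (if b = 0 then t al
       else if a = 0 then s (simplical_face j be)
       else a *\<^sub>R t (\<lambda>i. al i / a) + b *\<^sub>R s (\<lambda>k. simplical_face j be k / b))"
      unfolding conv_simplex_def Let_def restrict_apply' [OF yf] hA hB hal hbe
      by (simp only: fun_cong[OF hal] fun_cong[OF hbe])
    have R: "conv_simplex p r t (singular_face (Suc r) j s) y =
      (if b = 0 then t al
       else if a = 0 then singular_face (Suc r) j s be
       else a *\<^sub>R t (\<lambda>i. al i / a) + b *\<^sub>R singular_face (Suc r) j s (\<lambda>k. be k / b))"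
      unfolding conv_simplex_def Let_def restrict_apply' [OF y] a_def b_def al_def be_def ..
    show ?thesis
    proof (cases "b = 0")
      case True
      then show ?thesis using L R by simp
    next
      case False
      show ?thesis
      proof (cases "a = 0")
        case True
        then have "b = 1" using ab by simp
        then have "be \<in> standard_simplex r" using bst by simp
        then show ?thesis using True False L R by (simp add: singular_face_def)
      next
        case False
        then show ?thesis using \<open>b \<noteq> 0\<close> L R bst by (simp add: singular_face_def hdiv)
      qed
    qed
  qed
  show ?thesis
    unfolding singular_face_def[of "p + Suc r + 1"]
    apply (rule ext)
    subgoal for y
      using *[of y] by (simp add: conv_simplex_def[of p r] restrict_def)
    done
qed

lemma face_conv_zero_left:
  assumes "s \<in> extensional (standard_simplex r)"
  shows "singular_face (r + 1) 0 (conv_simplex 0 r t s) = s"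
proof (rule ext)
  fix y
  show "singular_face (r + 1) 0 (conv_simplex 0 r t s) y = s y"
  proof (cases "y \<in> standard_simplex r")
    case True
    have yf: "simplical_face 0 y \<in> standard_simplex (0 + r + 1)"
      using simplical_face_in_standard_simplex[of "r + 1" 0 y] True by simp
    have b: "(\<Sum>k\<le>r. y k) = 1" using True by (simp add: standard_simplex_def)
    have be: "(\<lambda>k. if k \<le> r then y k else 0) = y" using True by (auto simp: standard_simplex_def fun_eq_iff)
    have "(\<lambda>k. if k \<le> r then simplical_face 0 y (0 + 1 + k) else 0) = y"
      using True by (auto simp: standard_simplex_def fun_eq_iff simplical_face_def)
    moreover have "(\<Sum>k\<le>r. simplical_face 0 y (0 + 1 + k)) = 1" using b by (simp add: simplical_face_def)
    moreover have yf': "simplical_face 0 y \<in> standard_simplex (Suc r)" using yf by simp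
    moreover have "simplical_face 0 y 0 = 0" by (simp add: simplical_face_def)
    ultimately show ?thesis using True
      unfolding singular_face_def conv_simplex_def Let_def
      by (simp add: restrict_apply')
  next
    case False
    then show ?thesis using assms by (simp add: singular_face_def extensional_def)
  qed
qed

lemma face_conv_zero_right:
  assumes "t \<in> extensional (standard_simplex p)"
  shows "singular_face (p + 0 + 1) (p + 1) (conv_simplex p 0 t s) = t"
proof (rule ext)
  fix y
  show "singular_face (p + 0 + 1) (p + 1) (conv_simplex p 0 t s) y = t y"
  proof (cases "y \<in> standard_simplex p")
    case True
    have yf: "simplical_face (p + 1) y \<in> standard_simplex (p + 0 + 1)"
      using simplical_face_in_standard_simplex[of "p + 1" "p + 1" y] True by simp
    have yf': "simplical_face (Suc p) y \<in> standard_simplex (Suc p)" using yf by simp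
    have al: "(\<lambda>i. if i \<le> p then simplical_face (Suc p) y i else 0) = y"
      using True by (auto simp: standard_simplex_def fun_eq_iff simplical_face_def)
    have "simplical_face (p + 1) y (p + 1 + 0) = 0" by (simp add: simplical_face_def)
    then show ?thesis using True al
      unfolding singular_face_def conv_simplex_def Let_def
      by (simp add: restrict_apply' yf')
  next
    case False
    then show ?thesis using assms by (simp add: singular_face_def extensional_def)
  qed
qed




fun Dn :: "complex \<Rightarrow> 'a newt \<Rightarrow> 'a newt" where
  "Dn q (Ch p c) = (if p = 0 then Sc (coeffsum c) else Ch (p - 1) (qbd q p c))"
| "Dn q (Sc a) = Sc 0"

fun ndim :: "'a newt \<Rightarrow> int" where
  "ndim (Ch p c) = int p"
| "ndim (Sc a) = -1"

fun valid :: "'a newt \<Rightarrow> bool" where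
  "valid (Ch p c) = (\<forall>t\<in>Poly_Mapping.keys c. t \<in> extensional (standard_simplex p))"
| "valid (Sc a) = True"

lemma conv_chain_sum2: "conv_chain m n c (sum f S) = (\<Sum>i\<in>S. conv_chain m n c (f i))"
  by (rule additive_sum) (rule conv_chain_add2)

lemma pr_single:
  assumes t: "t \<in> extensional (standard_simplex p)" and s: "s \<in> extensional (standard_simplex r)"
  shows "qbd q (p + r + 1) (conv_chain p r (Poly_Mapping.single t 1) (Poly_Mapping.single s 1))
    = newt_prod (Dn q (Ch p (Poly_Mapping.single t 1))) (Ch r (Poly_Mapping.single s 1))
      + qsmult (q ^ (p + 1)) (newt_prod (Ch p (Poly_Mapping.single t 1)) (Dn q (Ch r (Poly_Mapping.single s 1))))"
proof -
  have "qbd q (p + r + 1) (conv_chain p r (Poly_Mapping.single t 1) (Poly_Mapping.single s 1))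
      = (\<Sum>j\<le>p + r + 1. Poly_Mapping.single (singular_face (p + r + 1) j (conv_simplex p r t s)) (q ^ j))"
    by (simp add: conv_chain_single qbd_single del: One_nat_def sum.atMost_Suc atMost_Suc)
  also have "\<dots> = (\<Sum>j\<le>p. Poly_Mapping.single (singular_face (p + r + 1) j (conv_simplex p r t s)) (q ^ j))
     + (\<Sum>k\<le>r. Poly_Mapping.single (singular_face (p + r + 1) (p + 1 + k) (conv_simplex p r t s)) (q ^ (p + 1 + k)))"
    by (rule sum_split_at)
  also have "(\<Sum>j\<le>p. Poly_Mapping.single (singular_face (p + r + 1) j (conv_simplex p r t s)) (q ^ j))
      = newt_prod (Dn q (Ch p (Poly_Mapping.single t 1))) (Ch r (Poly_Mapping.single s 1))"
  proof (cases p)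
    case 0
    then show ?thesis using face_conv_zero_left[OF s, of t] by (simp add: qsmult_single)
  next
    case (Suc p')
    have "(\<Sum>j\<le>p. Poly_Mapping.single (singular_face (p + r + 1) j (conv_simplex p r t s)) (q ^ j))
       = (\<Sum>j\<le>p. Poly_Mapping.single (conv_simplex p' r (singular_face (Suc p') j t) s) (q ^ j))"
      using face_conv_left[of _ p' r t s] Suc by (intro sum.cong) auto
    then show ?thesis using Suc
      by (simp add: qbd_single conv_chain_sum1 conv_chain_single del: One_nat_def sum.atMost_Suc atMost_Suc)
  qed
  also have "(\<Sum>k\<le>r. Poly_Mapping.single (singular_face (p + r + 1) (p + 1 + k) (conv_simplex p r t s)) (q ^ (p + 1 + k)))
      = qsmult (q ^ (p + 1)) (newt_prod (Ch p (Poly_Mapping.single t 1)) (Dn q (Ch r (Poly_Mapping.single s 1))))"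
  proof (cases r)
    case 0
    then show ?thesis using face_conv_zero_right[OF t, of s] by (simp add: qsmult_single)
  next
    case (Suc r')
    have "(\<Sum>k\<le>r. Poly_Mapping.single (singular_face (p + r + 1) (p + 1 + k) (conv_simplex p r t s)) (q ^ (p + 1 + k)))
       = (\<Sum>k\<le>r. Poly_Mapping.single (conv_simplex p r' t (singular_face (Suc r') k s)) (q ^ (p + 1) * q ^ k))"
      using face_conv_right[of _ r' p t s] Suc by (intro sum.cong) (auto simp: power_add mult.assoc)
    then show ?thesis using Suc
      by (simp add: qbd_single conv_chain_sum2 conv_chain_single qsmult_sum qsmult_single del: One_nat_def sum.atMost_Suc atMost_Suc)
  qed
  finally show ?thesis .
qed

lemma qbd_0[simp]: "qbd q 0 c = 0" by (simp add: qbd_def)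

lemmas lin_simps = qbd_add conv_chain_add1 conv_chain_add2 qsmult_add qsmult_add_left coeffsum_add
  qbd_qsmult conv_chain_qsmult1 conv_chain_qsmult2 coeffsum_qsmult

lemma pr_chch:
  assumes c: "\<forall>t\<in>Poly_Mapping.keys c. t \<in> extensional (standard_simplex p)"
    and d: "\<forall>s\<in>Poly_Mapping.keys d. s \<in> extensional (standard_simplex r)"
  shows "qbd q (p + r + 1) (conv_chain p r c d)
    = newt_prod (Dn q (Ch p c)) (Ch r d) + qsmult (q ^ (p + 1)) (newt_prod (Ch p c) (Dn q (Ch r d)))"
proof -
  have step: "qbd q (p + r + 1) (conv_chain p r (Poly_Mapping.single t 1) d)
    = newt_prod (Dn q (Ch p (Poly_Mapping.single t 1))) (Ch r d) + qsmult (q ^ (p + 1)) (newt_prod (Ch p (Poly_Mapping.single t 1)) (Dn q (Ch r d)))"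
    if t: "t \<in> extensional (standard_simplex p)" for t
    apply (rule lin_eq[where Phi="\<lambda>d. qbd q (p + r + 1) (conv_chain p r (Poly_Mapping.single t 1) d)"
          and Psi="\<lambda>d. newt_prod (Dn q (Ch p (Poly_Mapping.single t 1))) (Ch r d) + qsmult (q ^ (p + 1)) (newt_prod (Ch p (Poly_Mapping.single t 1)) (Dn q (Ch r d)))"])
    subgoal by (simp add: lin_simps)
    subgoal by (simp add: lin_simps)
    subgoal by (cases p; cases r) (simp_all add: lin_simps add_ac)
    subgoal by (cases p; cases r) (simp_all add: lin_simps mult_ac)
    subgoal using pr_single[OF t] d by blast
    done
  show ?thesis
    apply (rule lin_eq[where Phi="\<lambda>c. qbd q (p + r + 1) (conv_chain p r c d)"
          and Psi="\<lambda>c. newt_prod (Dn q (Ch p c)) (Ch r d) + qsmult (q ^ (p + 1)) (newt_prod (Ch p c) (Dn q (Ch r d)))"])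
    subgoal by (simp add: lin_simps)
    subgoal by (simp add: lin_simps)
    subgoal by (cases p; cases r) (simp_all add: lin_simps add_ac)
    subgoal by (cases p; cases r) (simp_all add: lin_simps mult_ac)
    subgoal using step c by blast
    done
qed

lemma pr:
  assumes "valid A" "valid B"
  shows "qbd q (nat (ndim A + ndim B + 1)) (newt_prod A B)
    = newt_prod (Dn q A) B + qsmult (q ^ nat (ndim A + 1)) (newt_prod A (Dn q B))"
proof (cases A)
  case (Ch p c)
  show ?thesis
  proof (cases B)
    case (Ch r d)
    have "nat (int p + int r + 1) = p + r + 1" "nat (int p + 1) = p + 1" by auto
    then show ?thesis using pr_chch[of c p d r q] assms \<open>A = Ch p c\<close> Ch by simp
  next
    case (Sc a)
    then show ?thesis using \<open>A = Ch p c\<close> by (simp add: qbd_qsmult)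
  qed
next
  case (Sc a)
  show ?thesis
  proof (cases B)
    case (Ch r d)
    then show ?thesis using \<open>A = Sc a\<close> by (simp add: qbd_qsmult)
  next
    case (Sc b)
    then show ?thesis using \<open>A = Sc a\<close> by (simp add: qbd_def)
  qed
qed




lemma keys_qbd: "Poly_Mapping.keys (qbd q p c) \<subseteq> {singular_face p j s | j s. True}"
proof (cases "p = 0")
  case False
  have "Poly_Mapping.keys (qbd q p c) \<subseteq> (\<Union>s\<in>Poly_Mapping.keys c. Poly_Mapping.keys (\<Sum>j\<le>p. Poly_Mapping.single (singular_face p j s) (q ^ j * Poly_Mapping.lookup c s)))"
    using False unfolding qbd_def by (simp only: if_False) (rule keys_sum)
  also have "\<dots> \<subseteq> (\<Union>s\<in>Poly_Mapping.keys c. \<Union>j\<in>{..p}. Poly_Mapping.keys (Poly_Mapping.single (singular_face p j s) (q ^ j * Poly_Mapping.lookup c s)))"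
    by (intro UN_mono order_refl keys_sum)
  also have "\<dots> \<subseteq> (\<Union>s\<in>Poly_Mapping.keys c. \<Union>j\<in>{..p}. {singular_face p j s})"
    by (intro UN_mono order_refl) simp
  also have "\<dots> \<subseteq> {singular_face p j s | j s. True}"
    by blast
  finally show ?thesis .
qed simp

lemma qbdpow_ext:
  assumes "tu \<in> extensional (standard_simplex m)" "i \<le> m"
  shows "\<forall>t\<in>Poly_Mapping.keys (qbdpow q i m (Poly_Mapping.single tu 1)). t \<in> extensional (standard_simplex (m - i))"
  using assms(2)
proof (induction i)
  case 0 then show ?case using assms(1) by simp
next
  case (Suc i)
  show ?case
  proof
    fix t assume "t \<in> Poly_Mapping.keys (qbdpow q (Suc i) m (Poly_Mapping.single tu 1))"
    then obtain j s where "t = singular_face (m - i) j s" using keys_qbd by fastforce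
    then show "t \<in> extensional (standard_simplex (m - Suc i))" by (simp add: singular_face_def)
  qed
qed

lemma valid_newton: "tu \<in> extensional (standard_simplex m) \<Longrightarrow> valid (newton q m tu i)"
  using qbdpow_ext[of tu m i q] by (simp add: newton_def)

lemma coeffsum_qbdpow:
  "i \<le> m \<Longrightarrow> coeffsum (qbdpow q i m (Poly_Mapping.single tu 1)) = (\<Prod>l\<in>{m + 1 - i<..m + 1}. qint q l)"
proof (induction i)
  case 0 then show ?case by simp
next
  case (Suc i)
  have e: "{m - i<..Suc m} = insert (Suc (m - i)) {Suc m - i<..Suc m}" using Suc.prems by auto
  show ?case using Suc by (simp add: coeffsum_qbd e)
qed

lemma qfact_alt: "qfact q (Suc m) = (\<Prod>l\<in>{1<..Suc m}. qint q l)"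
proof -
  have "{1..Suc m} = insert 1 {1<..Suc m}" by auto
  then show ?thesis by (simp add: qfact_def qint_def)
qed

lemma Dn_newton: "Dn q (newton q m tu i) = newton q m tu (Suc i)"
proof -
  consider "i < m" | "i = m" | "i > m" by arith
  then show ?thesis
  proof cases
    case 1
    then show ?thesis by (simp add: newton_def Suc_diff_Suc)
  next
    case 2
    then show ?thesis using coeffsum_qbdpow[of m m q tu] by (simp add: newton_def qfact_alt)
  next
    case 3
    then show ?thesis by (simp add: newton_def)
  qed
qed

lemma ndim_newton: "ndim (newton q m tu j) = (if j \<le> m + 1 then int m - int j else -1)"
  by (simp add: newton_def)

lemma newton_big: "j \<ge> m + 2 \<Longrightarrow> newton q m tu j = Sc 0"
  by (simp add: newton_def)

lemma newt_prod_Sc0[simp]: "newt_prod (Sc 0) B = 0" "newt_prod A (Sc 0) = 0"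
  by (cases B; simp; fail) (cases A; simp)

lemma dimfix:
  assumes "i \<le> k"
  shows "qbd q (m + n + 1 - k) (newt_prod (newton q m tu (k - i)) (newton q n sg i))
    = qbd q (nat (ndim (newton q m tu (k - i)) + ndim (newton q n sg i) + 1)) (newt_prod (newton q m tu (k - i)) (newton q n sg i))"
proof -
  consider "k - i \<ge> m + 2" | "i \<ge> n + 2" | "k - i = m + 1 \<and> i = n + 1" | "k - i \<le> m + 1" "i \<le> n + 1" "\<not> (k - i = m + 1 \<and> i = n + 1)"
    by arith
  then show ?thesis
  proof cases
    case 1 then show ?thesis by (simp add: newton_big)
  next
    case 2 then show ?thesis by (simp add: newton_big)
  next
    case 3
    then have h1: "k - i = m + 1" and h2: "i = n + 1" by auto
    have "newton q m tu (k - i) = Sc (qfact q (m + 1))" unfolding h1 by (simp add: newton_def)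
    moreover have "newton q n sg i = Sc (qfact q (n + 1))" unfolding h2 by (simp add: newton_def)
    ultimately have "newt_prod (newton q m tu (k - i)) (newton q n sg i) = 0" by (simp only: newt_prod.simps)
    then show ?thesis by (simp only: qbd_zero)
  next
    case 4
    then have "nat (ndim (newton q m tu (k - i)) + ndim (newton q n sg i) + 1) = m + n + 1 - k"
      using assms by (simp add: ndim_newton)
    then show ?thesis by simp
  qed
qed

lemma qfix:
  assumes "q \<noteq> 0"
  shows "qsmult (q ^ nat (ndim (newton q m tu j) + 1)) (newt_prod (newton q m tu j) B)
    = qsmult (q powi (int m + 1 - int j)) (newt_prod (newton q m tu j) B)"
proof (cases "j \<le> m + 1")
  case True
  have h1: "int m + 1 - int j = int (m + 1 - j)" using True by simp
  have h2: "nat (ndim (newton q m tu j) + 1) = m + 1 - j" using True by (simp add: ndim_newton)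
  show ?thesis unfolding h1 h2 power_int_of_nat ..
next
  case False then show ?thesis by (simp add: newton_big)
qed

lemma qbinom_big: "k > n \<Longrightarrow> qbinom q n k = 0"
proof (induction n arbitrary: k)
  case 0 then show ?case by (cases k) auto
next
  case (Suc n) then show ?case by (cases k) auto
qed




lemma coef:
  fixes q :: complex
  assumes q0: "q \<noteq> 0"
  shows "q powi (int (Suc i) * (int m + 1 - int (Suc k) + int (Suc i))) * qbinom q (Suc k) (Suc i)
    = q powi (int (Suc i) * (int m + 1 - int k + int (Suc i))) * qbinom q k (Suc i)
      + q powi (int i * (int m + 1 - int k + int i)) * qbinom q k i * q powi (int m + 1 - int k + int i)"
proof -
  define E where "E = int m + 1 - int k + int i"
  have e1: "int (Suc i) * (int m + 1 - int (Suc k) + int (Suc i)) = (int i + 1) * E"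
    by (simp add: E_def algebra_simps)
  have e2: "int (Suc i) * (int m + 1 - int k + int (Suc i)) = (int i + 1) * E + int (Suc i)"
    by (simp add: E_def algebra_simps)
  have p2: "q powi ((int i + 1) * E + int (Suc i)) = q powi ((int i + 1) * E) * q ^ Suc i"
    using q0 by (simp add: power_int_add power_int_of_nat del: of_nat_Suc)
  have p3: "q powi (int i * E) * q powi E = q powi ((int i + 1) * E)"
    using q0 by (simp add: power_int_add[symmetric] algebra_simps)
  show ?thesis
    unfolding e1 e2 p2 E_def[symmetric]
    using p3 by (simp add: algebra_simps)
qed

theorem proposition4p4:
  fixes N :: nat and q :: complex and X :: "'a::euclidean_space set"
    and tu sg :: "(nat \<Rightarrow> real) \<Rightarrow> 'a" and m n k :: nat
  assumes "prime N" and "N \<ge> 3" and "q ^ N = 1" and "q \<noteq> 1"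
    and "convex X"
    and "singular_simplex m (top_of_set X) tu"
    and "singular_simplex n (top_of_set X) sg"
  shows "qbdpow q k (m + n + 1) (Poly_Mapping.single (conv_simplex m n tu sg) 1)
       = (\<Sum>i\<le>k. qsmult (q powi (int i * (int m + 1 - int k + int i)) * qbinom q k i)
                    (newt_prod (newton q m tu (k - i)) (newton q n sg i)))"
proof -
  have q0: "q \<noteq> 0" using assms(2,3) by (cases "q = 0") (auto simp: power_0_left)
  have tue: "tu \<in> extensional (standard_simplex m)" and sge: "sg \<in> extensional (standard_simplex n)"
    using assms(6,7) by (simp_all add: singular_simplex_def)
  define T where "T j i = newt_prod (newton q m tu j) (newton q n sg i)" for j i
  define c where "c k i = q powi (int i * (int m + 1 - int k + int i)) * qbinom q k i" for k i :: nat
  have main: "qbdpow q k (m + n + 1) (Poly_Mapping.single (conv_simplex m n tu sg) 1) = (\<Sum>i\<le>k. qsmult (c k i) (T (k - i) i))" for k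
  proof (induction k)
    case 0
    then show ?case by (simp add: T_def c_def newton_def conv_chain_single)
  next
    case (Suc k)
    have step: "qbd q (m + n + 1 - k) (T (k - i) i) = T (Suc k - i) i + qsmult (q powi (int m + 1 - int k + int i)) (T (k - i) (Suc i))"
      if i: "i \<le> k" for i
    proof -
      have "qbd q (m + n + 1 - k) (T (k - i) i)
          = qbd q (nat (ndim (newton q m tu (k - i)) + ndim (newton q n sg i) + 1)) (T (k - i) i)"
        unfolding T_def by (rule dimfix[OF i])
      also have "\<dots> = newt_prod (Dn q (newton q m tu (k - i))) (newton q n sg i)
          + qsmult (q ^ nat (ndim (newton q m tu (k - i)) + 1)) (newt_prod (newton q m tu (k - i)) (Dn q (newton q n sg i)))"
        unfolding T_def by (rule pr) (simp_all add: valid_newton tue sge)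
      also have "\<dots> = T (Suc k - i) i + qsmult (q powi (int m + 1 - int (k - i))) (T (k - i) (Suc i))"
        unfolding T_def Dn_newton qfix[OF q0] Suc_diff_le[OF i] ..
      also have "int m + 1 - int (k - i) = int m + 1 - int k + int i" using i by simp
      finally show ?thesis .
    qed
    have "qbdpow q (Suc k) (m + n + 1) (Poly_Mapping.single (conv_simplex m n tu sg) 1)
        = qbd q (m + n + 1 - k) (\<Sum>i\<le>k. qsmult (c k i) (T (k - i) i))"
      using Suc by simp
    also have "\<dots> = (\<Sum>i\<le>k. qsmult (c k i) (qbd q (m + n + 1 - k) (T (k - i) i)))"
      by (simp add: qbd_sum qbd_qsmult)
    also have "\<dots> = (\<Sum>i\<le>k. qsmult (c k i) (T (Suc k - i) i) + qsmult (c k i * q powi (int m + 1 - int k + int i)) (T (k - i) (Suc i)))"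
      by (intro sum.cong refl) (use step in \<open>simp add: qsmult_add\<close>)
    also have "\<dots> = (\<Sum>i\<le>k. qsmult (c k i) (T (Suc k - i) i)) + (\<Sum>i\<le>k. qsmult (c k i * q powi (int m + 1 - int k + int i)) (T (k - i) (Suc i)))"
      by (rule sum.distrib)
    also have "(\<Sum>i\<le>k. qsmult (c k i) (T (Suc k - i) i)) = qsmult (c k 0) (T (Suc k) 0) + (\<Sum>i\<le>k. qsmult (c k (Suc i)) (T (k - i) (Suc i)))"
    proof -
      have "c k (Suc k) = 0" by (simp add: c_def qbinom_big)
      then have "(\<Sum>i\<le>k. qsmult (c k i) (T (Suc k - i) i)) = (\<Sum>i\<le>Suc k. qsmult (c k i) (T (Suc k - i) i))"
        by simp
      also have "\<dots> = qsmult (c k 0) (T (Suc k) 0) + (\<Sum>i\<le>k. qsmult (c k (Suc i)) (T (k - i) (Suc i)))"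
        by (subst sum.atMost_Suc_shift) simp
      finally show ?thesis .
    qed
    also have "qsmult (c k 0) (T (Suc k) 0) + (\<Sum>i\<le>k. qsmult (c k (Suc i)) (T (k - i) (Suc i)))
        + (\<Sum>i\<le>k. qsmult (c k i * q powi (int m + 1 - int k + int i)) (T (k - i) (Suc i)))
      = qsmult (c (Suc k) 0) (T (Suc k) 0) + (\<Sum>i\<le>k. qsmult (c (Suc k) (Suc i)) (T (k - i) (Suc i)))"
    proof -
      have "c k 0 = c (Suc k) 0" by (simp add: c_def)
      moreover have "c (Suc k) (Suc i) = c k (Suc i) + c k i * q powi (int m + 1 - int k + int i)" for i
        unfolding c_def by (rule coef[OF q0])
      ultimately show ?thesis by (simp add: qsmult_add_left sum.distrib add.assoc)
    qed
    also have "\<dots> = (\<Sum>i\<le>Suc k. qsmult (c (Suc k) i) (T (Suc k - i) i))"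
      by (subst sum.atMost_Suc_shift) simp
    finally show ?case .
  qed
  show ?thesis using main[of k] by (simp add: T_def c_def)
qed


end
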